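(* Let $q=p^f$ be a prime power and $N>2$ an integer with $N\mid(q-1)$; put $k=(q-1)/N$. Let $\gamma$ be a primitive element of $\mathbb{F}_q$, $C_0=\langle\gamma^N\rangle$, and let $\eta_a=\sum_{x\in\gamma^aC_0}\psi(x)$, $0\le a\le N-1$. Suppose the $\eta_a$ take exactly three distinct rational values $\alpha_1,\alpha_2,\alpha_3$, and for $i=1,2,3$ let $I_i=\{a\in\mathbb{Z}_N:\eta_a=\alpha_i\}$. Then $$|I_1|=-\frac{\alpha_2\alpha_3(q-1)+k(q-k+\alpha_2+\alpha_3)}{k(\alpha_1-\alpha_2)(\alpha_3-\alpha_1)},\quad |I_2|=-\frac{\alpha_1\alpha_3(q-1)+k(q-k+\alpha_1+\alpha_3)}{k(\alpha_1-\alpha_2)(\alpha_2-\alpha_3)},$$ $$|I_3|=-\frac{\alpha_1\alpha_2(q-1)+k(q-k+\alpha_1+\alpha_2)}{k(\alpha_2-\alpha_3)(\alpha_3-\alpha_1)}.$$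
   Context: $\psi$ is the canonical additive character of $\mathbb{F}_q$: $\psi(x)=\xi_p^{\mathrm{Tr}_{q/p}(x)}$, where $\xi_p$ is a complex primitive $p$-th root of unity and $\mathrm{Tr}_{q/p}$ is the absolute trace. *)

theory Defs
  imports Complex_Main "HOL-Computational_Algebra.Primes"
begin

definition abs_trace :: "nat \<Rightarrow> nat \<Rightarrow> 'a::field \<Rightarrow> 'a" where
  "abs_trace p f x = (\<Sum>i<f. x ^ (p ^ i))"

text \<open>The trace lies in the prime field {of_nat j | j < p}; its representative in {0..p-1}.\<close>
definition trace_nat :: "nat \<Rightarrow> nat \<Rightarrow> 'a::field \<Rightarrow> nat" where
  "trace_nat p f x = (THE j. j < p \<and> of_nat j = abs_trace p f x)"

text \<open>Canonical additive character psi(x) = xi^(Tr(x)), xi a primitive p-th root of unity.\<close>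
definition add_char :: "complex \<Rightarrow> nat \<Rightarrow> nat \<Rightarrow> 'a::field \<Rightarrow> complex" where
  "add_char \<xi> p f x = \<xi> ^ trace_nat p f x"

definition cyc_class0 :: "nat \<Rightarrow> 'a::field \<Rightarrow> 'a set" where
  "cyc_class0 N \<gamma> = {\<gamma> ^ (N * j) | j. True}"

definition gauss_period :: "complex \<Rightarrow> nat \<Rightarrow> nat \<Rightarrow> nat \<Rightarrow> 'a::field \<Rightarrow> nat \<Rightarrow> complex" where
  "gauss_period \<xi> p f N \<gamma> a = (\<Sum>x\<in>((\<lambda>c. \<gamma> ^ a * c) ` cyc_class0 N \<gamma>). add_char \<xi> p f x)"

definition primitive_elem :: "'a::{field,finite} \<Rightarrow> bool" where
  "primitive_elem \<gamma> \<longleftrightarrow> \<gamma> \<noteq> 0 \<and> (\<forall>n. 0 < n \<and> n < card (UNIV :: 'a set) - 1 \<longrightarrow> \<gamma> ^ n \<noteq> 1)"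

end

theory Submission imports Defs "HOL-Computational_Algebra.Polynomial" begin

lemma ofnat_dvd_zero:
  assumes "of_nat p = (0::'a::comm_semiring_1)" "p dvd n" shows "of_nat n = (0::'a)"
  using assms by (metis dvd_def mult_zero_left of_nat_mult)

lemma frob:
  fixes x y :: "'a::comm_ring_1"
  assumes "prime p" "of_nat p = (0::'a)"
  shows "(x+y)^p = x^p + y^p"
proof -
  have p0: "p > 0" using assms(1) prime_gt_0_nat by blast
  have "(x+y)^p = (\<Sum>k\<le>p. of_nat (p choose k) * x^k * y^(p-k))"
    by (simp add: binomial_ring)
  also have "\<dots> = (\<Sum>k\<in>{0,p}. of_nat (p choose k) * x^k * y^(p-k))"
  proof (rule sum.mono_neutral_right)
    show "\<forall>i\<in>{..p} - {0, p}. of_nat (p choose i) * x ^ i * y ^ (p - i) = 0"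
    proof
      fix i assume "i \<in> {..p} - {0, p}"
      hence "p dvd (p choose i)" using assms(1) by (intro dvd_choose_prime) auto
      hence "of_nat (p choose i) = (0::'a)" using ofnat_dvd_zero assms(2) by blast
      thus "of_nat (p choose i) * x ^ i * y ^ (p - i) = 0" by simp
    qed
  qed auto
  also have "\<dots> = x^p + y^p" using p0 by simp
  finally show ?thesis .
qed

lemma frob_pow:
  fixes x y :: "'a::comm_ring_1"
  assumes "prime p" "of_nat p = (0::'a)"
  shows "(x+y)^(p^i) = x^(p^i) + y^(p^i)"
proof (induction i)
  case (Suc i)
  have "(x+y)^(p^Suc i) = ((x+y)^(p^i))^p" by (simp add: power_mult[symmetric] mult.commute)
  also have "\<dots> = (x^(p^i))^p + (y^(p^i))^p" using Suc frob[OF assms] by simp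
  finally show ?case by (simp add: power_mult[symmetric] mult.commute)
qed simp

lemma frob_sum:
  fixes g :: "'b \<Rightarrow> 'a::comm_ring_1"
  assumes "prime p" "of_nat p = (0::'a)" "finite S"
  shows "(sum g S)^(p^i) = (\<Sum>s\<in>S. g s ^ (p^i))"
  using assms(3) by (induction S rule: finite_induct) (auto simp: frob_pow[OF assms(1,2)] zero_power prime_gt_0_nat assms(1))

lemma ofnat_zero_iff:
  assumes "prime p" "of_nat p = (0::'a::field)"
  shows "(of_nat n = (0::'a)) \<longleftrightarrow> p dvd n"
proof
  assume h: "of_nat n = (0::'a)"
  show "p dvd n"
  proof (rule ccontr)
    assume "\<not> p dvd n"
    then obtain x y where "n*x = Suc (p*y)" using bezout_prime assms(1) by blast
    hence "(of_nat (n*x)::'a) = of_nat (Suc (p*y))" by simp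
    moreover have "(of_nat (n*x)::'a) = 0" using h by simp
    moreover have "(of_nat (Suc (p*y))::'a) = 1" using assms(2) by simp
    ultimately have "(0::'a) = 1" by simp
    thus False by simp
  qed
qed (use assms ofnat_dvd_zero in blast)

lemma fermat_ff:
  fixes x :: "'a::{field,finite}"
  shows "x ^ card (UNIV::'a set) = x"
proof -
  have c0: "card (UNIV::'a set) > 0" by (rule finite_UNIV_card_ge_0) simp
  show ?thesis
  proof (cases "x = 0")
  case True
  then show ?thesis using c0 by (simp add: zero_power)
next
  case False
  let ?U = "UNIV - {0::'a}"
  have bij: "bij_betw (\<lambda>y. x*y) ?U ?U"
    by (rule bij_betw_byWitness[where f'="\<lambda>y. y / x"]) (use False in auto)
  have "prod (\<lambda>y. y) ?U = prod (\<lambda>y. x*y) ?U"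
    using prod.reindex_bij_betw[OF bij, of "\<lambda>y. y"] by (rule sym)
  also have "\<dots> = prod (\<lambda>y. x) ?U * prod (\<lambda>y. y) ?U" by (rule prod.distrib)
  also have "prod (\<lambda>y. x) ?U = x ^ card ?U" by (rule prod_constant)
  finally have eq: "1 * prod (\<lambda>y. y) ?U = x ^ card ?U * prod (\<lambda>y. y) ?U" by (simp only: mult_1_left)
  have fU: "finite ?U" by simp
  have nz: "prod (\<lambda>y. y) ?U \<noteq> 0" unfolding prod_zero_iff[OF fU] by blast
  have "1 = x ^ card ?U" by (rule iffD1[OF mult_right_cancel[OF nz] eq])
  hence x1: "x ^ card ?U = 1" by (rule sym)
  have "card ?U = card (UNIV::'a set) - 1" by (rule card_Diff_singleton) auto
  with c0 have "card (UNIV::'a set) = Suc (card ?U)" by linarith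
  hence "x ^ card (UNIV::'a set) = x * x ^ card ?U" by (simp only: power_Suc)
  also have "\<dots> = x" using x1 by (simp only: mult_1_right)
  finally show ?thesis .
qed
qed
lemma ofnat_pow_p:
  assumes "prime p" "of_nat p = (0::'a::comm_ring_1)"
  shows "(of_nat j :: 'a)^p = of_nat j"
proof (induction j)
  case 0 then show ?case using assms(1) prime_gt_0_nat by (simp add: zero_power)
next
  case (Suc j)
  then show ?case using frob[OF assms, of "of_nat j" 1] by (simp add: add.commute)
qed

lemma ofnat_inj_p:
  assumes "prime p" "of_nat p = (0::'a::field)" "i < p" "j < p" "(of_nat i::'a) = of_nat j"
  shows "i = j"
proof (rule ccontr)
  assume ne: "i \<noteq> j"
  { fix a b :: nat assume ab: "a < b" "b < p" "(of_nat a::'a) = of_nat b"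
    have "(of_nat (b - a)::'a) = 0" using ab by (simp add: of_nat_diff)
    hence "p dvd (b - a)" using ofnat_zero_iff[OF assms(1,2)] by blast
    moreover have "0 < b - a" using ab by simp
    ultimately have "p \<le> b - a" by (rule dvd_imp_le)
    hence False using ab by linarith }
  note * = this
  show False
  proof (cases "i < j")
    case True show ?thesis by (rule *[of i j]) (use True assms in auto)
  next
    case False then have "j < i" using ne by linarith
    show ?thesis by (rule *[of j i]) (use \<open>j < i\<close> assms in auto)
  qed
qed

lemma roots_p:
  fixes z :: "'a::field"
  assumes "prime p" "of_nat p = (0::'a)" "z^p = z"
  shows "\<exists>j<p. z = of_nat j"
proof -
  have p2: "p \<ge> 2" using assms(1) prime_ge_2_nat by blast
  define P :: "'a poly" where "P = monom 1 p - [:0,1:]"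
  obtain m where m: "p = Suc (Suc m)" using p2 by (metis add_2_eq_Suc le_Suc_ex)
  have cP: "coeff P p = 1" by (simp add: P_def m)
  hence P0: "P \<noteq> 0" by auto
  have dP: "degree P \<le> p" unfolding P_def using p2
    by (intro degree_diff_le) (auto simp: degree_monom_eq degree_pCons_eq_if)
  have polyP: "\<And>x. poly P x = x^p - x" by (simp add: P_def poly_monom)
  have R: "{x. poly P x = 0} = {x. x^p = x}" by (simp add: polyP)
  have "card {x::'a. x^p = x} \<le> p" using card_poly_roots_bound[OF P0] dP R by simp
  moreover have sub: "of_nat ` {..<p} \<subseteq> {x::'a. x^p = x}" using ofnat_pow_p[OF assms(1,2)] by auto
  moreover have "card (of_nat ` {..<p} :: 'a set) = p"
    by (subst card_image) (auto intro!: inj_onI ofnat_inj_p[OF assms(1,2)])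
  moreover have "finite {x::'a. x^p = x}"
    using poly_roots_finite[OF P0] R by simp
  ultimately have "of_nat ` {..<p} = {x::'a. x^p = x}"
    by (intro card_seteq) auto
  thus ?thesis using assms(3) by auto
qed

locale ffield =
  fixes p f :: nat and \<xi> :: complex and dummy :: "'a::{field,finite} itself"
  assumes pr: "prime p" and ch: "of_nat p = (0::'a)" and cardq: "card (UNIV :: 'a set) = p ^ f"
    and xip: "\<xi> ^ p = 1" and xiprim: "\<forall>j. 0 < j \<and> j < p \<longrightarrow> \<xi> ^ j \<noteq> 1"
begin

abbreviation Tr :: "'a \<Rightarrow> 'a" where "Tr \<equiv> abs_trace p f"
abbreviation psi :: "'a \<Rightarrow> complex" where "psi \<equiv> add_char \<xi> p f"

lemma p_pos: "p > 0" using pr prime_gt_0_nat by blast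

lemma f_pos: "f > 0"
proof (rule ccontr)
  assume "\<not> f > 0"
  hence "card (UNIV::'a set) = 1" using cardq by simp
  then obtain z where z: "(UNIV::'a set) = {z}" using card_1_singletonE by blast
  have "(0::'a) \<in> {z}" "(1::'a) \<in> {z}" unfolding z[symmetric] by simp_all
  hence "(0::'a) = 1" by simp
  thus False by simp
qed

lemma Tr_add: "Tr (x + y) = Tr x + Tr y"
  unfolding abs_trace_def by (simp add: frob_pow[OF pr ch] sum.distrib)

lemma Tr_zero: "Tr 0 = 0"
  unfolding abs_trace_def using p_pos by (simp add: zero_power)

lemma Tr_pow: "Tr x ^ p = Tr x"
proof -
  have "Tr x ^ p = (Tr x)^(p^1)" by simp
  also have "\<dots> = (\<Sum>i<f. (x ^ p ^ i) ^ (p^1))" unfolding abs_trace_def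
    by (rule frob_sum[OF pr ch]) simp
  also have "\<dots> = (\<Sum>i<f. x ^ p ^ Suc i)"
    by (intro sum.cong refl) (simp add: power_mult[symmetric] mult.commute)
  also have "\<dots> = Tr x"
  proof -
    have xq: "x ^ p ^ f = x" using fermat_ff[of x] cardq by simp
    have "(\<Sum>i<Suc f. x ^ p ^ i) = x ^ p ^ 0 + (\<Sum>i<f. x ^ p ^ Suc i)"
      by (rule sum.lessThan_Suc_shift)
    moreover have "(\<Sum>i<Suc f. x ^ p ^ i) = (\<Sum>i<f. x ^ p ^ i) + x ^ p ^ f"
      by (rule sum.lessThan_Suc)
    ultimately show ?thesis unfolding abs_trace_def using xq by simp
  qed
  finally show ?thesis .
qed
lemma tn: "trace_nat p f x < p \<and> of_nat (trace_nat p f x) = Tr x"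
proof -
  obtain j where j: "j < p" "Tr x = of_nat j" using roots_p[OF pr ch Tr_pow] by blast
  have "\<exists>!j. j < p \<and> of_nat j = Tr x"
  proof (rule ex1I[of _ j])
    show "j < p \<and> of_nat j = Tr x" using j by simp
    fix i assume "i < p \<and> of_nat i = Tr x"
    thus "i = j" using ofnat_inj_p[OF pr ch, of i j] j by simp
  qed
  then show ?thesis unfolding trace_nat_def by (rule theI')
qed

lemma tn_unique: "j < p \<Longrightarrow> of_nat j = Tr x \<Longrightarrow> trace_nat p f x = j"
  using tn[of x] ofnat_inj_p[OF pr ch, of "trace_nat p f x" j] by simp

lemma ofnat_mod: "(of_nat (n mod p)::'a) = of_nat n"
proof -
  have "(of_nat n::'a) = of_nat (n mod p + p * (n div p))" by simp
  also have "\<dots> = of_nat (n mod p) + of_nat p * of_nat (n div p)" by (simp only: of_nat_add of_nat_mult)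
  also have "\<dots> = of_nat (n mod p)" by (simp only: ch mult_zero_left add_0_right)
  finally show ?thesis by (rule sym)
qed

lemma xi_mod: "\<xi> ^ (n mod p) = \<xi> ^ n"
proof -
  have "\<xi> ^ n = \<xi> ^ (n mod p + p * (n div p))" by simp
  also have "\<dots> = \<xi> ^ (n mod p) * (\<xi> ^ p) ^ (n div p)" by (simp only: power_add power_mult)
  also have "\<dots> = \<xi> ^ (n mod p)" by (simp only: xip power_one mult_1_right)
  finally show ?thesis by (rule sym)
qed

lemma psi_add: "psi (x + y) = psi x * psi y"
proof -
  have "trace_nat p f (x+y) = (trace_nat p f x + trace_nat p f y) mod p"
  proof (rule tn_unique)
    show "(trace_nat p f x + trace_nat p f y) mod p < p" using p_pos by simp
    show "of_nat ((trace_nat p f x + trace_nat p f y) mod p) = Tr (x + y)"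
      by (simp only: ofnat_mod of_nat_add tn Tr_add)
  qed
  thus ?thesis unfolding add_char_def by (simp only: xi_mod power_add)
qed

lemma psi_zero: "psi 0 = 1"
proof -
  have "trace_nat p f (0::'a) = 0" by (rule tn_unique) (use p_pos Tr_zero in auto)
  thus ?thesis unfolding add_char_def by simp
qed

lemma Tr_nontriv: "\<exists>x. Tr x \<noteq> 0"
proof (rule ccontr)
  assume "\<not> (\<exists>x. Tr x \<noteq> 0)"
  hence all: "\<forall>x. Tr x = 0" by blast
  define T :: "'a poly" where "T = (\<Sum>i<f. monom 1 (p^i))"
  have p2: "p \<ge> 2" using pr prime_ge_2_nat by blast
  have "coeff T (p^(f-1)) = (\<Sum>i<f. if p^i = p^(f-1) then 1 else 0)"
    unfolding T_def by (simp add: coeff_sum coeff_monom)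
  also have "\<dots> = (\<Sum>i\<in>{f-1}. 1)"
  proof (rule sum.mono_neutral_cong_right)
    show "finite {..<f}" by simp
    show "{f - 1} \<subseteq> {..<f}" using f_pos by simp
    show "\<forall>i\<in>{..<f} - {f - 1}. (if p ^ i = p ^ (f - 1) then 1 else (0::'a)) = 0"
      using p2 by (simp add: power_inject_exp)
    show "\<And>x. x \<in> {f - 1} \<Longrightarrow> (if p ^ x = p ^ (f - 1) then 1 else (0::'a)) = 1" by simp
  qed
  finally have "coeff T (p^(f-1)) = 1" by simp
  hence T0: "T \<noteq> 0" by auto
  have dT: "degree T \<le> p^(f-1)" unfolding T_def
  proof (rule degree_sum_le)
    fix i assume "i \<in> {..<f}"
    hence "p^i \<le> p^(f-1)" using p2 by (intro power_increasing) auto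
    thus "degree (monom (1::'a) (p ^ i)) \<le> p ^ (f - 1)" by (simp add: degree_monom_eq)
  qed simp
  have "\<And>x. poly T x = Tr x" unfolding T_def abs_trace_def by (simp add: poly_sum poly_monom)
  hence "{x. poly T x = 0} = UNIV" using all by auto
  hence "card (UNIV::'a set) \<le> p^(f-1)" using card_poly_roots_bound[OF T0] dT by simp
  moreover have "p^(f-1) < p^f" using p2 f_pos by (intro power_strict_increasing) auto
  ultimately show False using cardq by simp
qed

lemma psi_nontriv: "\<exists>x. psi x \<noteq> 1"
proof -
  obtain x where x: "Tr x \<noteq> 0" using Tr_nontriv by blast
  have "trace_nat p f x \<noteq> 0"
  proof
    assume "trace_nat p f x = 0"
    hence "Tr x = 0" using tn[of x] by simp
    with x show False by simp
  qed
  hence "\<xi> ^ trace_nat p f x \<noteq> 1" using xiprim tn[of x] by auto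
  thus ?thesis unfolding add_char_def by blast
qed

lemma psi_sum: "(\<Sum>x\<in>UNIV. psi x) = 0"
proof -
  obtain y where y: "psi y \<noteq> 1" using psi_nontriv by blast
  have bij: "bij_betw (\<lambda>x. y + x) UNIV UNIV"
    by (rule bij_betw_byWitness[where f'="\<lambda>z. z - y"]) auto
  have "(\<Sum>x\<in>UNIV. psi (y + x)) = (\<Sum>x\<in>UNIV. psi x)"
    by (rule sum.reindex_bij_betw[OF bij])
  moreover have "(\<Sum>x\<in>UNIV. psi (y + x)) = psi y * (\<Sum>x\<in>UNIV. psi x)"
    by (simp add: psi_add sum_distrib_left)
  ultimately have "(1 - psi y) * (\<Sum>x\<in>UNIV. psi x) = 0" by (simp add: algebra_simps)
  thus ?thesis using y by simp
qed

lemma psi_sum_nz: "c \<noteq> 0 \<Longrightarrow> (\<Sum>x\<in>UNIV-{0}. psi (c*x)) = -1"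
proof -
  assume c: "c \<noteq> 0"
  have bij: "bij_betw (\<lambda>x. c * x) UNIV UNIV"
    by (rule bij_betw_byWitness[where f'="\<lambda>z. z / c"]) (use c in auto)
  have "(\<Sum>x\<in>UNIV. psi (c*x)) = (\<Sum>x\<in>UNIV. psi x)"
    by (rule sum.reindex_bij_betw[OF bij])
  hence s0: "(\<Sum>x\<in>UNIV. psi (c*x)) = 0" using psi_sum by simp
  have "(\<Sum>x\<in>UNIV. psi (c*x)) = psi (c*0) + (\<Sum>x\<in>UNIV-{0}. psi (c*x))"
    by (rule sum.remove) auto
  hence "0 = 1 + (\<Sum>x\<in>UNIV-{0}. psi (c*x))" using s0 psi_zero by simp
  thus ?thesis by (simp add: eq_neg_iff_add_eq_0 add.commute)
qed

lemma xi_norm: "norm \<xi> = 1"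
proof -
  have "norm \<xi> ^ p = 1 ^ p" using arg_cong[OF xip, of norm] by (simp only: norm_power norm_one power_one)
  thus ?thesis by (rule power_eq_imp_eq_base) (use p_pos in auto)
qed

lemma psi_norm: "norm (psi x) = 1"
  unfolding add_char_def by (simp add: norm_power xi_norm)

lemma psi_cnj: "cnj (psi x) = psi (-x)"
proof -
  have a: "psi x * psi (-x) = 1" using psi_add[of x "-x"] psi_zero by simp
  have b: "psi x * cnj (psi x) = 1" using complex_norm_square[of "psi x"] psi_norm[of x] by simp
  have "cnj (psi x) = cnj (psi x) * (psi x * psi (-x))" using a by simp
  also have "\<dots> = (psi x * cnj (psi x)) * psi (-x)" by (simp only: mult_ac)
  also have "\<dots> = psi (-x)" using b by simp
  finally show ?thesis .
qed

end

locale cyc =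
  fixes N :: nat and \<gamma> :: "'a::{field,finite}"
  assumes prim: "primitive_elem \<gamma>" and Ndvd: "N dvd (card (UNIV::'a set) - 1)" and Npos: "N > 0"
begin

definition n :: nat where "n = card (UNIV::'a set) - 1"
definition k :: nat where "k = n div N"
definition C0 :: "'a set" where "C0 = cyc_class0 N \<gamma>"
definition D :: "nat \<Rightarrow> 'a set" where "D a = (\<lambda>c. \<gamma> ^ a * c) ` C0"

lemma card_ge2: "card (UNIV::'a set) \<ge> 2"
proof -
  have "card {0::'a, 1} = 2" by simp
  moreover have "card {0::'a, 1} \<le> card (UNIV::'a set)" by (rule card_mono) auto
  ultimately show ?thesis by simp
qed

lemma n_pos: "n > 0" unfolding n_def using card_ge2 by simp

lemma Nk: "N * k = n" unfolding k_def n_def using Ndvd by simp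

lemma g0: "\<gamma> \<noteq> 0" using prim unfolding primitive_elem_def by simp

lemma gn: "\<gamma> ^ n = 1"
proof -
  have "card (UNIV::'a set) = Suc n" unfolding n_def using card_ge2 by simp
  hence "\<gamma> * \<gamma> ^ n = \<gamma> * 1" using fermat_ff[of \<gamma>] by simp
  thus ?thesis using g0 by simp
qed

lemma ord: "\<gamma> ^ m = 1 \<Longrightarrow> n dvd m"
proof -
  assume m: "\<gamma> ^ m = 1"
  have "\<gamma> ^ m = \<gamma> ^ (n * (m div n) + m mod n)" by simp
  also have "\<dots> = (\<gamma> ^ n) ^ (m div n) * \<gamma> ^ (m mod n)" by (simp only: power_add power_mult)
  finally have "\<gamma> ^ m = (\<gamma> ^ n) ^ (m div n) * \<gamma> ^ (m mod n)" .
  hence r: "\<gamma> ^ (m mod n) = 1" using m gn by simp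
  have "m mod n < n" using n_pos by simp
  have pr: "\<forall>t. 0 < t \<and> t < n \<longrightarrow> \<gamma> ^ t \<noteq> 1" using prim unfolding primitive_elem_def n_def by blast
  have "m mod n = 0"
  proof (rule ccontr)
    assume "m mod n \<noteq> 0"
    hence "0 < m mod n \<and> m mod n < n" using \<open>m mod n < n\<close> by simp
    hence "\<gamma> ^ (m mod n) \<noteq> 1" using pr by blast
    thus False using r by simp
  qed
  thus ?thesis by (simp add: dvd_eq_mod_eq_0)
qed

lemma eq_exp: "\<gamma> ^ i = \<gamma> ^ j \<Longrightarrow> i mod n = j mod n"
proof -
  { fix i j :: nat assume ij: "i \<le> j" "\<gamma> ^ i = \<gamma> ^ j"
    have "\<gamma> ^ j = \<gamma> ^ i * \<gamma> ^ (j - i)" using ij(1) by (simp flip: power_add)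
    hence "\<gamma> ^ i * \<gamma> ^ (j - i) = \<gamma> ^ i * 1" using ij by simp
    hence "\<gamma> ^ (j - i) = 1" using g0 by simp
    hence "n dvd (j - i)" by (rule ord)
    hence "j mod n = i mod n" using mod_eq_dvd_iff_nat[OF ij(1)] by simp }
  note * = this
  assume "\<gamma> ^ i = \<gamma> ^ j"
  show ?thesis
  proof (cases "i \<le> j")
    case True thus ?thesis using *[of i j] \<open>\<gamma> ^ i = \<gamma> ^ j\<close> by simp
  next
    case False hence "j \<le> i" by simp
    thus ?thesis using *[of j i] \<open>\<gamma> ^ i = \<gamma> ^ j\<close> by simp
  qed
qed

lemma surj_pow: "x \<noteq> 0 \<Longrightarrow> \<exists>i<n. x = \<gamma> ^ i"
proof -
  assume x: "x \<noteq> 0"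
  have sub: "(\<lambda>i. \<gamma> ^ i) ` {..<n} \<subseteq> UNIV - {0}" using g0 by auto
  have inj: "inj_on (\<lambda>i. \<gamma> ^ i) {..<n}"
  proof (rule inj_onI)
    fix i j assume "i \<in> {..<n}" "j \<in> {..<n}" "\<gamma> ^ i = \<gamma> ^ j"
    thus "i = j" using eq_exp[of i j] by simp
  qed
  have "card ((\<lambda>i. \<gamma> ^ i) ` {..<n}) = n" using inj by (simp add: card_image)
  moreover have "card (UNIV - {0::'a}) = n" unfolding n_def by (rule card_Diff_singleton) auto
  ultimately have "(\<lambda>i. \<gamma> ^ i) ` {..<n} = UNIV - {0}" using sub by (intro card_seteq) auto
  thus ?thesis using x by auto
qed

lemma k_pos: "k > 0" using Nk n_pos by (cases k) auto

lemma C0_eq: "C0 = (\<lambda>j. \<gamma> ^ (N * j)) ` {..<k}"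
proof
  show "C0 \<subseteq> (\<lambda>j. \<gamma> ^ (N * j)) ` {..<k}"
  proof
    fix c assume "c \<in> C0"
    then obtain j where c: "c = \<gamma> ^ (N * j)" unfolding C0_def cyc_class0_def by auto
    have "N * j = N * (j mod k) + n * (j div k)" using Nk
      by (metis add.commute distrib_left div_mult_mod_eq mult.assoc mult.commute)
    hence "c = \<gamma> ^ (N * (j mod k)) * (\<gamma> ^ n) ^ (j div k)" using c by (simp add: power_add power_mult)
    hence "c = \<gamma> ^ (N * (j mod k))" using gn by simp
    moreover have "j mod k < k" using k_pos by simp
    ultimately show "c \<in> (\<lambda>j. \<gamma> ^ (N * j)) ` {..<k}" by blast
  qed
  show "(\<lambda>j. \<gamma> ^ (N * j)) ` {..<k} \<subseteq> C0" unfolding C0_def cyc_class0_def by auto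
qed

lemma card_C0: "card C0 = k"
proof -
  have "inj_on (\<lambda>j. \<gamma> ^ (N * j)) {..<k}"
  proof (rule inj_onI)
    fix i j assume ij: "i \<in> {..<k}" "j \<in> {..<k}" "\<gamma> ^ (N * i) = \<gamma> ^ (N * j)"
    hence "(N * i) mod n = (N * j) mod n" using eq_exp by blast
    moreover have "N * i < N * k" "N * j < N * k" using ij(1,2) Npos by simp_all
    hence "N * i < n" "N * j < n" using Nk by simp_all
    ultimately have "N * i = N * j" by simp
    thus "i = j" using Npos by simp
  qed
  thus ?thesis unfolding C0_eq by (simp add: card_image)
qed

lemma one_C0: "1 \<in> C0" unfolding C0_def cyc_class0_def by (auto intro: exI[of _ 0])

lemma C0_mult: "c \<in> C0 \<Longrightarrow> d \<in> C0 \<Longrightarrow> c * d \<in> C0"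
  unfolding C0_def cyc_class0_def
  by (auto simp: power_add[symmetric] distrib_left[symmetric])

lemma C0_inv: "c \<in> C0 \<Longrightarrow> \<exists>d\<in>C0. c * d = 1"
proof -
  assume "c \<in> C0"
  then obtain j where c: "c = \<gamma> ^ (N * j)" unfolding C0_def cyc_class0_def by auto
  define d where "d = \<gamma> ^ (N * (j * (n - 1)))"
  have "d \<in> C0" unfolding d_def C0_def cyc_class0_def by auto
  moreover have "c * d = 1"
  proof -
    have "N * j + N * (j * (n - 1)) = n * (N * j)" using n_pos
      by (cases n) (auto simp: algebra_simps)
    have "c * d = \<gamma> ^ (N * j + N * (j * (n - 1)))" unfolding c d_def by (simp only: power_add)
    also have "\<dots> = \<gamma> ^ (n * (N * j))" using \<open>N * j + N * (j * (n - 1)) = n * (N * j)\<close> by (simp only:)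
    also have "\<dots> = (\<gamma> ^ n) ^ (N * j)" by (simp only: power_mult)
    finally show ?thesis using gn by simp
  qed
  ultimately show ?thesis by blast
qed

lemma C0_nz: "c \<in> C0 \<Longrightarrow> c \<noteq> 0"
  unfolding C0_def cyc_class0_def using g0 by auto

lemma D_shift: "x \<in> D a \<Longrightarrow> D a = (\<lambda>t. x * t) ` C0"
proof -
  assume "x \<in> D a"
  then obtain c where c: "c \<in> C0" "x = \<gamma> ^ a * c" unfolding D_def by auto
  obtain d where d: "d \<in> C0" "c * d = 1" using C0_inv[OF c(1)] by blast
  show ?thesis
  proof
    show "D a \<subseteq> (\<lambda>t. x * t) ` C0"
    proof
      fix y assume "y \<in> D a"
      then obtain c' where c': "c' \<in> C0" "y = \<gamma> ^ a * c'" unfolding D_def by auto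
      have "y = x * (d * c')" using c c' d by (simp add: algebra_simps)
      moreover have "d * c' \<in> C0" using C0_mult d c' by simp
      ultimately show "y \<in> (\<lambda>t. x * t) ` C0" by blast
    qed
    show "(\<lambda>t. x * t) ` C0 \<subseteq> D a"
    proof
      fix y assume "y \<in> (\<lambda>t. x * t) ` C0"
      then obtain t where t: "t \<in> C0" "y = x * t" by auto
      have "y = \<gamma> ^ a * (c * t)" using t c by (simp add: mult.assoc)
      moreover have "c * t \<in> C0" using C0_mult c t by simp
      ultimately show "y \<in> D a" unfolding D_def by blast
    qed
  qed
qed

lemma D_disj: "a < N \<Longrightarrow> b < N \<Longrightarrow> a \<noteq> b \<Longrightarrow> D a \<inter> D b = {}"
proof (rule ccontr)
  assume ab: "a < N" "b < N" "a \<noteq> b" "D a \<inter> D b \<noteq> {}"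
  then obtain y where "y \<in> D a" "y \<in> D b" by blast
  then obtain i j where "\<gamma> ^ a * \<gamma> ^ (N * i) = \<gamma> ^ b * \<gamma> ^ (N * j)"
    unfolding D_def C0_def cyc_class0_def by auto
  hence "\<gamma> ^ (a + N * i) = \<gamma> ^ (b + N * j)" by (simp add: power_add)
  hence "(a + N * i) mod n = (b + N * j) mod n" by (rule eq_exp)
  hence "(a + N * i) mod n mod N = (b + N * j) mod n mod N" by simp
  moreover have Ndn: "N dvd n" using Nk by (metis dvd_triv_left)
  ultimately have "(a + N * i) mod N = (b + N * j) mod N" by (simp add: mod_mod_cancel[OF Ndn])
  hence "a = b" using ab by simp
  thus False using ab by simp
qed

lemma D_union: "(\<Union>a\<in>{..<N}. D a) = UNIV - {0}"
proof
  show "(\<Union>a\<in>{..<N}. D a) \<subseteq> UNIV - {0}"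
    unfolding D_def using g0 C0_nz by auto
  show "UNIV - {0} \<subseteq> (\<Union>a\<in>{..<N}. D a)"
  proof
    fix x assume "x \<in> UNIV - {0::'a}"
    then obtain i where i: "x = \<gamma> ^ i" using surj_pow by blast
    have "x = \<gamma> ^ (i mod N + N * (i div N))" using i by simp
    hence "x = \<gamma> ^ (i mod N) * \<gamma> ^ (N * (i div N))" by (simp only: power_add)
    moreover have "\<gamma> ^ (N * (i div N)) \<in> C0" unfolding C0_def cyc_class0_def by auto
    moreover have "i mod N < N" using Npos by simp
    ultimately show "x \<in> (\<Union>a\<in>{..<N}. D a)" unfolding D_def by blast
  qed
qed

lemma sum_D: "(\<Sum>a<N. \<Sum>x\<in>D a. g x) = (\<Sum>x\<in>UNIV-{0}. g x)"
proof -
  have "(\<Sum>x\<in>(\<Union>a\<in>{..<N}. D a). g x) = (\<Sum>a<N. \<Sum>x\<in>D a. g x)"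
    by (rule sum.UNION_disjoint) (auto dest: D_disj)
  thus ?thesis using D_union by simp
qed

lemma sum_D_shift: "x \<in> D a \<Longrightarrow> x \<noteq> 0 \<Longrightarrow> (\<Sum>y\<in>D a. g y) = (\<Sum>t\<in>C0. g (x * t))"
proof -
  assume x: "x \<in> D a" "x \<noteq> 0"
  have "inj_on (\<lambda>t. x * t) C0" using x(2) by (auto intro: inj_onI)
  thus ?thesis unfolding D_shift[OF x(1)] by (simp add: sum.reindex)
qed

end

lemma solve3:
  fixes x1 x2 x3 a1 a2 a3 S1 S2 NN kk q :: real
  assumes "x1 + x2 + x3 = NN" "x1*a1 + x2*a2 + x3*a3 = -1" "x1*a1^2 + x2*a2^2 + x3*a3^2 = q - kk"
    and "NN * kk = q - 1" "kk > 0" "a1 \<noteq> a2" "a1 \<noteq> a3"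
  shows "x1 = - (a2 * a3 * (q - 1) + kk * (q - kk + a2 + a3)) / (kk * (a1 - a2) * (a3 - a1))"
proof -
  have E0: "x1*(a1-a2)*(a1-a3) = (x1*a1^2 + x2*a2^2 + x3*a3^2) - (a2+a3)*(x1*a1 + x2*a2 + x3*a3) + a2*a3*(x1+x2+x3)"
    by (simp add: algebra_simps power2_eq_square)
  hence E: "x1*(a1-a2)*(a1-a3) = (q - kk) + (a2+a3) + a2*a3*NN" using assms(1-3) by simp
  have d: "kk * (a1 - a2) * (a3 - a1) \<noteq> 0" using assms(5-7) by simp
  have "x1 * (kk * (a1 - a2) * (a3 - a1)) = - (kk * (x1*(a1-a2)*(a1-a3)))" by (simp add: algebra_simps)
  also have "\<dots> = - (a2 * a3 * (NN * kk) + kk * (q - kk + a2 + a3))" unfolding E by (simp add: algebra_simps)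
  also have "\<dots> = - (a2 * a3 * (q - 1) + kk * (q - kk + a2 + a3))" using assms(4) by simp
  finally show ?thesis using d by (simp add: eq_divide_eq)
qed

lemma count3:
  fixes r :: "nat \<Rightarrow> real" and A :: "nat set"
  assumes "finite A" "\<forall>a\<in>A. r a \<in> {a1, a2, a3}" "a1 \<noteq> a2" "a2 \<noteq> a3" "a1 \<noteq> a3"
  shows "(\<Sum>a\<in>A. g (r a)) = real (card {a\<in>A. r a = a1}) * g a1 + real (card {a\<in>A. r a = a2}) * g a2 + real (card {a\<in>A. r a = a3}) * g a3"
proof -
  have c: "\<And>b. real (card {a\<in>A. r a = b}) = (\<Sum>a\<in>A. if r a = b then 1 else 0)"
    by (subst sum.inter_filter[OF assms(1), symmetric]) simp
  have "(\<Sum>a\<in>A. g (r a)) = (\<Sum>a\<in>A. (if r a = a1 then 1 else 0) * g a1 + (if r a = a2 then 1 else 0) * g a2 + (if r a = a3 then 1 else 0) * g a3)"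
  proof (rule sum.cong[OF refl])
    fix a assume "a \<in> A"
    hence "r a = a1 \<or> r a = a2 \<or> r a = a3" using assms(2) by blast
    thus "g (r a) = (if r a = a1 then 1 else 0) * g a1 + (if r a = a2 then 1 else 0) * g a2 + (if r a = a3 then 1 else 0) * g a3"
      using assms(3-5) by (elim disjE) simp_all
  qed
  also have "\<dots> = (\<Sum>a\<in>A. (if r a = a1 then 1 else 0)) * g a1 + (\<Sum>a\<in>A. (if r a = a2 then 1 else 0)) * g a2 + (\<Sum>a\<in>A. (if r a = a3 then 1 else 0)) * g a3"
    by (simp only: sum.distrib sum_distrib_right)
  finally show ?thesis by (simp only: c)
qed
theorem lemma2p2:
  fixes \<gamma> :: "'a::{field,finite}"
    and p f N k :: nat and q :: nat and \<xi> :: complex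
    and \<alpha>1 \<alpha>2 \<alpha>3 :: real
  assumes "prime p" and "of_nat p = (0::'a)" and "card (UNIV :: 'a set) = p ^ f" and "q = card (UNIV :: 'a set)"
    and "\<xi> ^ p = 1" and "\<forall>j. 0 < j \<and> j < p \<longrightarrow> \<xi> ^ j \<noteq> 1"
    and "N > 2" and "N dvd (q - 1)" and "k = (q - 1) div N"
    and "primitive_elem \<gamma>"
    and "\<alpha>1 \<in> \<rat>" and "\<alpha>2 \<in> \<rat>" and "\<alpha>3 \<in> \<rat>"
    and "\<alpha>1 \<noteq> \<alpha>2" and "\<alpha>2 \<noteq> \<alpha>3" and "\<alpha>1 \<noteq> \<alpha>3"
    and "gauss_period \<xi> p f N \<gamma> ` {0..<N} = complex_of_real ` {\<alpha>1, \<alpha>2, \<alpha>3}"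
  shows "real (card {a\<in>{0..<N}. gauss_period \<xi> p f N \<gamma> a = complex_of_real \<alpha>1}) =
           - (\<alpha>2 * \<alpha>3 * (real q - 1) + real k * (real q - real k + \<alpha>2 + \<alpha>3))
             / (real k * (\<alpha>1 - \<alpha>2) * (\<alpha>3 - \<alpha>1))
    \<and> real (card {a\<in>{0..<N}. gauss_period \<xi> p f N \<gamma> a = complex_of_real \<alpha>2}) =
           - (\<alpha>1 * \<alpha>3 * (real q - 1) + real k * (real q - real k + \<alpha>1 + \<alpha>3))
             / (real k * (\<alpha>1 - \<alpha>2) * (\<alpha>2 - \<alpha>3))
    \<and> real (card {a\<in>{0..<N}. gauss_period \<xi> p f N \<gamma> a = complex_of_real \<alpha>3}) =
           - (\<alpha>1 * \<alpha>2 * (real q - 1) + real k * (real q - real k + \<alpha>1 + \<alpha>2))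
             / (real k * (\<alpha>2 - \<alpha>3) * (\<alpha>3 - \<alpha>1))"
  proof -
  interpret F: ffield p f \<xi> "TYPE('a)"
    by unfold_locales (use assms in auto)
  interpret C: cyc N \<gamma>
    by unfold_locales (use assms in auto)
  define \<eta> where "\<eta> a = gauss_period \<xi> p f N \<gamma> a" for a
  have etaD: "\<eta> a = (\<Sum>x\<in>C.D a. F.psi x)" for a
    unfolding \<eta>_def gauss_period_def C.D_def C.C0_def ..
  have Dnz: "a < N \<Longrightarrow> x \<in> C.D a \<Longrightarrow> x \<noteq> 0" for a x
    using C.D_union by blast
  have S1: "(\<Sum>a<N. \<eta> a) = -1"
    using C.sum_D[of F.psi] F.psi_sum_nz[of 1] by (simp add: etaD)
  have q2: "q \<ge> 2" using C.card_ge2 assms(4) by simp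
  have kk: "C.k = k" unfolding C.k_def C.n_def using assms(4,9) by simp
  have S2: "(\<Sum>a<N. \<eta> a * cnj (\<eta> a)) = of_nat q - of_nat k"
  proof -
    have "\<eta> a * cnj (\<eta> a) = (\<Sum>x\<in>C.D a. \<Sum>t\<in>C.C0. F.psi (x + - (x * t)))" if a: "a < N" for a
    proof -
      have "\<eta> a * cnj (\<eta> a) = (\<Sum>x\<in>C.D a. \<Sum>y\<in>C.D a. F.psi x * cnj (F.psi y))"
        unfolding etaD by (simp add: sum_product)
      also have "\<dots> = (\<Sum>x\<in>C.D a. \<Sum>y\<in>C.D a. F.psi (x + - y))"
        by (simp add: F.psi_cnj F.psi_add[symmetric])
      also have "\<dots> = (\<Sum>x\<in>C.D a. \<Sum>t\<in>C.C0. F.psi (x + - (x * t)))"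
        by (rule sum.cong[OF refl], rule C.sum_D_shift) (use Dnz a in auto)
      finally show ?thesis .
    qed
    hence "(\<Sum>a<N. \<eta> a * cnj (\<eta> a)) = (\<Sum>a<N. \<Sum>x\<in>C.D a. \<Sum>t\<in>C.C0. F.psi (x + - (x * t)))"
      by simp
    also have "\<dots> = (\<Sum>x\<in>UNIV-{0}. \<Sum>t\<in>C.C0. F.psi (x + - (x * t)))" by (rule C.sum_D)
    also have "\<dots> = (\<Sum>t\<in>C.C0. \<Sum>x\<in>UNIV-{0}. F.psi ((1 - t) * x))"
      by (subst sum.swap) (simp add: algebra_simps)
    also have "\<dots> = (\<Sum>t\<in>C.C0. if t = 1 then of_nat q - 1 else -1)"
    proof (rule sum.cong[OF refl])
      fix t assume "t \<in> C.C0"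
      show "(\<Sum>x\<in>UNIV-{0}. F.psi ((1 - t) * x)) = (if t = 1 then of_nat q - 1 else -1)"
      proof (cases "t = 1")
        case True
        have "card (UNIV - {0::'a}) = q - 1" using assms(4) by (simp add: card_Diff_singleton)
        thus ?thesis using True F.psi_zero q2 by (simp add: of_nat_diff)
      next
        case False
        thus ?thesis using F.psi_sum_nz[of "1 - t"] by simp
      qed
    qed
    also have "\<dots> = (of_nat q - 1) + (\<Sum>t\<in>C.C0 - {1}. if t = 1 then of_nat q - 1 else -1)"
      by (subst sum.remove[OF _ C.one_C0]) (auto simp: C.C0_eq)
    also have "(\<Sum>t\<in>C.C0 - {1}. if t = 1 then of_nat q - 1 else (-1::complex)) = (\<Sum>t\<in>C.C0 - {1}. -1)"
      by (rule sum.cong) auto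
    also have "\<dots> = - of_nat (k - 1)"
      using C.card_C0 kk C.one_C0 by (simp add: card_Diff_singleton C.C0_eq)
    also have "(of_nat q - 1) + - of_nat (k - 1) = (of_nat q - of_nat k :: complex)"
      using C.k_pos kk by (simp add: of_nat_diff)
    finally show ?thesis .
  qed
  define r where "r a = Re (\<eta> a)" for a
  have rin: "\<forall>a\<in>{..<N}. r a \<in> {\<alpha>1, \<alpha>2, \<alpha>3}" and eta_r: "\<And>a. a < N \<Longrightarrow> \<eta> a = of_real (r a)"
  proof -
    have "\<eta> a \<in> complex_of_real ` {\<alpha>1, \<alpha>2, \<alpha>3}" if "a < N" for a
      using assms(17) that unfolding \<eta>_def by (metis atLeastLessThan_iff image_eqI zero_le)
    hence h: "\<exists>b\<in>{\<alpha>1, \<alpha>2, \<alpha>3}. \<eta> a = of_real b" if "a < N" for a using that by blast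
    show "\<forall>a\<in>{..<N}. r a \<in> {\<alpha>1, \<alpha>2, \<alpha>3}"
    proof
      fix a assume "a \<in> {..<N}"
      then obtain b where "b \<in> {\<alpha>1, \<alpha>2, \<alpha>3}" "\<eta> a = of_real b" using h by auto
      thus "r a \<in> {\<alpha>1, \<alpha>2, \<alpha>3}" unfolding r_def by simp
    qed
    show "\<eta> a = of_real (r a)" if aN: "a < N" for a
    proof -
      obtain b where "\<eta> a = of_real b" using h[OF aN] by blast
      thus ?thesis unfolding r_def by simp
    qed
  qed
  have R1: "(\<Sum>a<N. r a) = -1"
  proof -
    have "(\<Sum>a<N. r a) = Re (\<Sum>a<N. \<eta> a)" unfolding r_def by simp
    thus ?thesis using S1 by simp
  qed
  have R2: "(\<Sum>a<N. r a ^ 2) = real q - real k"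
  proof -
    have "(\<Sum>a<N. r a ^ 2) = Re (\<Sum>a<N. \<eta> a * cnj (\<eta> a))"
      by (simp add: eta_r power2_eq_square)
    thus ?thesis using S2 by simp
  qed
  have sets: "{a\<in>{0..<N}. gauss_period \<xi> p f N \<gamma> a = complex_of_real b} = {a\<in>{..<N}. r a = b}" for b
    using eta_r unfolding \<eta>_def by auto
  have d12: "\<alpha>1 \<noteq> \<alpha>2" "\<alpha>2 \<noteq> \<alpha>3" "\<alpha>1 \<noteq> \<alpha>3" using assms by auto
  note c3 = count3[OF _ rin d12]
  have e1: "real (card {a\<in>{..<N}. r a = \<alpha>1}) + real (card {a\<in>{..<N}. r a = \<alpha>2}) + real (card {a\<in>{..<N}. r a = \<alpha>3}) = real N"
    using c3[of "\<lambda>_. 1"] by simp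
  have e2: "real (card {a\<in>{..<N}. r a = \<alpha>1}) * \<alpha>1 + real (card {a\<in>{..<N}. r a = \<alpha>2}) * \<alpha>2 + real (card {a\<in>{..<N}. r a = \<alpha>3}) * \<alpha>3 = -1"
    using c3[of "\<lambda>x. x"] R1 by simp
  have e3: "real (card {a\<in>{..<N}. r a = \<alpha>1}) * \<alpha>1^2 + real (card {a\<in>{..<N}. r a = \<alpha>2}) * \<alpha>2^2 + real (card {a\<in>{..<N}. r a = \<alpha>3}) * \<alpha>3^2 = real q - real k"
    using c3[of "\<lambda>x. x^2"] R2 by simp
  have Nkr: "real N * real k = real q - 1"
  proof -
    have "N * k = q - 1" using C.Nk kk assms(4) unfolding C.n_def by simp
    hence "real (N * k) = real (q - 1)" by simp
    thus ?thesis using q2 by (simp add: of_nat_diff)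
  qed
  have kpos: "real k > 0" using C.k_pos kk by simp
  show ?thesis unfolding sets
  proof (intro conjI)
    show "real (card {a\<in>{..<N}. r a = \<alpha>1}) = - (\<alpha>2 * \<alpha>3 * (real q - 1) + real k * (real q - real k + \<alpha>2 + \<alpha>3)) / (real k * (\<alpha>1 - \<alpha>2) * (\<alpha>3 - \<alpha>1))"
      by (rule solve3) (use e1 e2 e3 Nkr kpos d12 in auto)
    have "real (card {a\<in>{..<N}. r a = \<alpha>2}) = - (\<alpha>3 * \<alpha>1 * (real q - 1) + real k * (real q - real k + \<alpha>3 + \<alpha>1)) / (real k * (\<alpha>2 - \<alpha>3) * (\<alpha>1 - \<alpha>2))"
    proof (rule solve3)
      show "real (card {a\<in>{..<N}. r a = \<alpha>2}) + real (card {a\<in>{..<N}. r a = \<alpha>3}) + real (card {a\<in>{..<N}. r a = \<alpha>1}) = real N"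
        using e1 by linarith
      show "real (card {a\<in>{..<N}. r a = \<alpha>2}) * \<alpha>2 + real (card {a\<in>{..<N}. r a = \<alpha>3}) * \<alpha>3 + real (card {a\<in>{..<N}. r a = \<alpha>1}) * \<alpha>1 = -1"
        using e2 by linarith
      show "real (card {a\<in>{..<N}. r a = \<alpha>2}) * \<alpha>2^2 + real (card {a\<in>{..<N}. r a = \<alpha>3}) * \<alpha>3^2 + real (card {a\<in>{..<N}. r a = \<alpha>1}) * \<alpha>1^2 = real q - real k"
        using e3 by linarith
    qed (use Nkr kpos d12 in auto)
    thus "real (card {a\<in>{..<N}. r a = \<alpha>2}) = - (\<alpha>1 * \<alpha>3 * (real q - 1) + real k * (real q - real k + \<alpha>1 + \<alpha>3)) / (real k * (\<alpha>1 - \<alpha>2) * (\<alpha>2 - \<alpha>3))"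
      by (simp add: mult_ac add_ac)
    have "real (card {a\<in>{..<N}. r a = \<alpha>3}) = - (\<alpha>1 * \<alpha>2 * (real q - 1) + real k * (real q - real k + \<alpha>1 + \<alpha>2)) / (real k * (\<alpha>3 - \<alpha>1) * (\<alpha>2 - \<alpha>3))"
    proof (rule solve3)
      show "real (card {a\<in>{..<N}. r a = \<alpha>3}) + real (card {a\<in>{..<N}. r a = \<alpha>1}) + real (card {a\<in>{..<N}. r a = \<alpha>2}) = real N"
        using e1 by linarith
      show "real (card {a\<in>{..<N}. r a = \<alpha>3}) * \<alpha>3 + real (card {a\<in>{..<N}. r a = \<alpha>1}) * \<alpha>1 + real (card {a\<in>{..<N}. r a = \<alpha>2}) * \<alpha>2 = -1"
        using e2 by linarith
      show "real (card {a\<in>{..<N}. r a = \<alpha>3}) * \<alpha>3^2 + real (card {a\<in>{..<N}. r a = \<alpha>1}) * \<alpha>1^2 + real (card {a\<in>{..<N}. r a = \<alpha>2}) * \<alpha>2^2 = real q - real k"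
        using e3 by linarith
    qed (use Nkr kpos d12 in auto)
    thus "real (card {a\<in>{..<N}. r a = \<alpha>3}) = - (\<alpha>1 * \<alpha>2 * (real q - 1) + real k * (real q - real k + \<alpha>1 + \<alpha>2)) / (real k * (\<alpha>2 - \<alpha>3) * (\<alpha>3 - \<alpha>1))"
      by (simp add: mult_ac)
  qed
qed

end
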